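(* Let $M\ge 2$ and let $\mathcal{P}$ be a Class I source set on $\{1,\dots,M\}$, i.e. a nonempty set of probability distributions on $\{1,\dots,M\}$ whose convex hull contains the uniform distribution $(1/M,\dots,1/M)$. Then for every $D\in(0,1]$, \[ \epsilon^*_{\mathrm{DP}}(\mathcal{P},D)=\begin{cases}\log\left((M-1)\frac{1-D}{D}\right), & 0<D<\frac{M-1}{M},\\[2pt] 0, & \frac{M-1}{M}\le D\le 1.\end{cases} \]
   Context: A mechanism is an $M\times M$ row-stochastic matrix $Q$ with entries $Q(j|i)$ = probability of releasing $j$ when the input is $i$, $i,j\in\{1,\dots,M\}$. Its diagonal distortions are $D_i=1-Q(i|i)$. Distortion is Hamming distortion, so the average distortion under a source distribution $P=(P_1,\dots,P_M)$ is $\sum_{i=1}^M P_iD_i$. A mechanism $Q$ is $(\mathcal{P},D)$-valid if $\sum_{i=1}^M P_iD_i\le D$ for every $P\in\mathcal{P}$; $\mathcal{Q}(\mathcal{P},D)$ denotes the set of all such mechanisms. The differential privacy leakage of $Q$ is $\epsilon_{\mathrm{DP}}(Q)=\min\{\epsilon\ge 0: Q(\hat x|x_1)\le e^{\epsilon}Q(\hat x|x_2)\text{ for all }x_1,x_2,\hat x\in\{1,\dots,M\}\}$ (equal to $+\infty$ if no finite $\epsilon$ works; all-zero columns are allowed). For $0<D\le 1$, $\epsilon^*_{\mathrm{DP}}(\mathcal{P},D)=\min_{Q\in\mathcal{Q}(\mathcal{P},D)}\epsilon_{\mathrm{DP}}(Q)$. Logarithms are natural. *)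

theory Defs
  imports "HOL-Analysis.Analysis"
begin

definition prob_dist :: "nat \<Rightarrow> (nat \<Rightarrow> real) \<Rightarrow> bool" where
  "prob_dist M P \<longleftrightarrow> (\<forall>i\<in>{1..M}. P i \<ge> 0) \<and> (\<Sum>i\<in>{1..M}. P i) = 1
     \<and> (\<forall>i. i \<notin> {1..M} \<longrightarrow> P i = 0)"

definition uniform_dist :: "nat \<Rightarrow> nat \<Rightarrow> real" where
  "uniform_dist M = (\<lambda>i. if i \<in> {1..M} then 1 / real M else 0)"

definition in_conv_hull :: "nat \<Rightarrow> (nat \<Rightarrow> real) \<Rightarrow> (nat \<Rightarrow> real) set \<Rightarrow> bool" where
  "in_conv_hull M R \<P> \<longleftrightarrow> (\<exists>S w. finite S \<and> S \<noteq> {} \<and> S \<subseteq> \<P> \<and> (\<forall>P\<in>S. w P \<ge> (0::real))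
      \<and> (\<Sum>P\<in>S. w P) = 1 \<and> (\<forall>i. (\<Sum>P\<in>S. w P * P i) = R i))"

definition class_I :: "nat \<Rightarrow> (nat \<Rightarrow> real) set \<Rightarrow> bool" where
  "class_I M \<P> \<longleftrightarrow> \<P> \<noteq> {} \<and> (\<forall>P\<in>\<P>. prob_dist M P) \<and> in_conv_hull M (uniform_dist M) \<P>"

text \<open>Mechanism: Q i j = Q(j|i), probability of releasing j on input i; row-stochastic.\<close>
definition mechanism :: "nat \<Rightarrow> (nat \<Rightarrow> nat \<Rightarrow> real) \<Rightarrow> bool" where
  "mechanism M Q \<longleftrightarrow> (\<forall>i\<in>{1..M}. (\<forall>j\<in>{1..M}. Q i j \<ge> 0) \<and> (\<Sum>j\<in>{1..M}. Q i j) = 1)"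

definition distortion :: "(nat \<Rightarrow> nat \<Rightarrow> real) \<Rightarrow> nat \<Rightarrow> real" where
  "distortion Q i = 1 - Q i i"

definition valid_mech :: "nat \<Rightarrow> (nat \<Rightarrow> real) set \<Rightarrow> real \<Rightarrow> (nat \<Rightarrow> nat \<Rightarrow> real) set" where
  "valid_mech M \<P> D = {Q. mechanism M Q \<and>
      (\<forall>P\<in>\<P>. (\<Sum>i\<in>{1..M}. P i * distortion Q i) \<le> D)}"

text \<open>DP leakage, valued in extended reals (infinity if no finite epsilon works).\<close>
definition eps_DP :: "nat \<Rightarrow> (nat \<Rightarrow> nat \<Rightarrow> real) \<Rightarrow> ereal" where
  "eps_DP M Q = Inf {ereal e | e. e \<ge> 0 \<and>
      (\<forall>x1\<in>{1..M}. \<forall>x2\<in>{1..M}. \<forall>xh\<in>{1..M}. Q x1 xh \<le> exp e * Q x2 xh)}"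

definition eps_DP_opt :: "nat \<Rightarrow> (nat \<Rightarrow> real) set \<Rightarrow> real \<Rightarrow> ereal" where
  "eps_DP_opt M \<P> D = Inf (eps_DP M ` valid_mech M \<P> D)"

end

theory Submission
  imports Defs
begin

lemma lower_key:
  fixes Q :: "nat \<Rightarrow> nat \<Rightarrow> real"
  assumes M: "M \<ge> 2" and mech: "mechanism M Q"
    and Sge: "real M * (1 - D) \<le> (\<Sum>i\<in>{1..M}. Q i i)" and D: "0 < D" "D \<le> 1"
    and dp: "\<forall>x1\<in>{1..M}. \<forall>x2\<in>{1..M}. \<forall>xh\<in>{1..M}. Q x1 xh \<le> exp e * Q x2 xh"
  shows "(real M - 1) * (1 - D) \<le> D * exp e"
proof -
  define S where "S = (\<Sum>i\<in>{1..M}. Q i i)"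
  define k where "k = exp (-e)"
  have kpos: "k > 0" by (simp add: k_def)
  have kexp: "k * exp e = 1" by (simp add: k_def exp_minus)
  have row: "Q i i + k * (S - Q i i) \<le> 1" if i: "i \<in> {1..M}" for i
  proof -
    have r1: "1 = (\<Sum>j\<in>{1..M}. Q i j)" using mech i by (simp add: mechanism_def)
    have r2: "(\<Sum>j\<in>{1..M}. Q i j) = Q i i + (\<Sum>j\<in>{1..M}-{i}. Q i j)"
      using i by (simp add: sum.remove)
    have r3: "(\<Sum>j\<in>{1..M}-{i}. k * Q j j) \<le> (\<Sum>j\<in>{1..M}-{i}. Q i j)"
    proof (rule sum_mono)
      fix j assume j: "j \<in> {1..M}-{i}"
      have "Q j j \<le> exp e * Q i j" using dp i j by auto
      then have "k * Q j j \<le> k * (exp e * Q i j)" using kpos by (simp add: mult_left_mono)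
      also have "\<dots> = Q i j" using kexp by (simp add: mult.assoc[symmetric])
      finally show "k * Q j j \<le> Q i j" .
    qed
    have r4: "(\<Sum>j\<in>{1..M}-{i}. k * Q j j) = k * (S - Q i i)"
      using i by (simp add: S_def sum_distrib_left[symmetric] sum_diff1)
    show ?thesis using r1 r2 r3 r4 by linarith
  qed
  have "(\<Sum>i\<in>{1..M}. Q i i + k * (S - Q i i)) \<le> (\<Sum>i\<in>{1..M}. (1::real))"
    by (rule sum_mono) (use row in auto)
  also have "\<dots> = real M" by simp
  finally have s1: "(\<Sum>i\<in>{1..M}. Q i i + k * (S - Q i i)) \<le> real M" .
  have "(\<Sum>i\<in>{1..M}. Q i i + k * (S - Q i i)) = S + k * (real M * S - S)"
    by (simp add: sum.distrib sum_distrib_left[symmetric] sum_subtractf S_def)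
  with s1 have s2: "S * (1 + k * (real M - 1)) \<le> real M" by (simp add: algebra_simps)
  have Mpos: "real M > 0" using M by simp
  have fpos: "1 + k * (real M - 1) > 0" using kpos M by (simp add: add_pos_nonneg)
  have "real M * (1 - D) * (1 + k * (real M - 1)) \<le> S * (1 + k * (real M - 1))"
    using Sge fpos by (simp add: S_def mult_right_mono)
  with s2 have "real M * ((1 - D) * (1 + k * (real M - 1))) \<le> real M * 1"
    by (simp add: mult.assoc)
  then have "(1 - D) * (1 + k * (real M - 1)) \<le> 1" using Mpos by simp
  then have "(1 - D) * (real M - 1) * k \<le> D" by (simp add: algebra_simps)
  then have "(1 - D) * (real M - 1) * k * exp e \<le> D * exp e" by simp
  moreover have "(1 - D) * (real M - 1) * k * exp e = (real M - 1) * (1 - D)"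
    using kexp by (simp add: mult.assoc)
  ultimately show ?thesis by simp
qed

lemma S_ge:
  assumes M: "M \<ge> 2" and cI: "class_I M \<P>" and Q: "Q \<in> valid_mech M \<P> D"
  shows "real M * (1 - D) \<le> (\<Sum>i\<in>{1..M}. Q i i)"
proof -
  obtain S w where S: "finite S" "S \<subseteq> \<P>" "\<forall>P\<in>S. w P \<ge> (0::real)"
      "(\<Sum>P\<in>S. w P) = 1" "\<forall>i. (\<Sum>P\<in>S. w P * P i) = uniform_dist M i"
    using cI unfolding class_I_def in_conv_hull_def by blast
  have v: "(\<Sum>i\<in>{1..M}. P i * distortion Q i) \<le> D" if "P \<in> S" for P
    using Q S(2) that unfolding valid_mech_def by auto
  have "(\<Sum>P\<in>S. w P * (\<Sum>i\<in>{1..M}. P i * distortion Q i)) \<le> (\<Sum>P\<in>S. w P * D)"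
    by (rule sum_mono) (use v S(3) in \<open>auto intro: mult_left_mono\<close>)
  also have "\<dots> = D" using S(4) by (simp add: sum_distrib_right[symmetric])
  finally have a: "(\<Sum>P\<in>S. w P * (\<Sum>i\<in>{1..M}. P i * distortion Q i)) \<le> D" .
  have "(\<Sum>P\<in>S. w P * (\<Sum>i\<in>{1..M}. P i * distortion Q i))
      = (\<Sum>i\<in>{1..M}. (\<Sum>P\<in>S. w P * P i) * distortion Q i)"
    by (simp add: sum_distrib_left sum_distrib_right mult.assoc sum.swap[of _ S])
  also have "\<dots> = (\<Sum>i\<in>{1..M}. (1 / real M) * (1 - Q i i))"
    using S(5) by (simp add: uniform_dist_def distortion_def)
  also have "\<dots> = (real M - (\<Sum>i\<in>{1..M}. Q i i)) / real M"
    by (simp add: sum_divide_distrib[symmetric] sum_subtractf)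
  finally have "(real M - (\<Sum>i\<in>{1..M}. Q i i)) / real M \<le> D" using a by simp
  moreover have "real M > 0" using M by simp
  ultimately show ?thesis by (simp add: divide_le_eq algebra_simps)
qed

definition cval :: "nat \<Rightarrow> real \<Rightarrow> real" where
  "cval M D = (if D < (real M - 1) / real M then ln ((real M - 1) * (1 - D) / D) else 0)"

lemma lower_c:
  assumes M: "M \<ge> 2" and cI: "class_I M \<P>" and Q: "Q \<in> valid_mech M \<P> D"
    and D: "0 < D" "D \<le> 1" and e: "e \<ge> 0"
    and dp: "\<forall>x1\<in>{1..M}. \<forall>x2\<in>{1..M}. \<forall>xh\<in>{1..M}. Q x1 xh \<le> exp e * Q x2 xh"
  shows "cval M D \<le> e"
proof (cases "D < (real M - 1) / real M")
  case True
  have Mpos: "real M > 0" using M by simp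
  have "(real M - 1) * (1 - D) \<le> D * exp e"
    using lower_key[OF M _ S_ge[OF M cI Q] D dp] Q by (simp add: valid_mech_def)
  then have le: "(real M - 1) * (1 - D) / D \<le> exp e" using D by (simp add: divide_le_eq mult.commute)
  have "D * real M < real M - 1" using True Mpos by (simp add: less_divide_eq)
  then have "D < (real M - 1) * (1 - D)" by (simp add: algebra_simps)
  then have pos: "(real M - 1) * (1 - D) / D > 0" using D by simp
  have "ln ((real M - 1) * (1 - D) / D) \<le> ln (exp e)"
    using le pos by (subst ln_le_cancel_iff) auto
  then show ?thesis using True by (simp add: cval_def)
next
  case False
  then show ?thesis using e by (simp add: cval_def)
qed

lemma eps_ge:
  assumes M: "M \<ge> 2" and cI: "class_I M \<P>" and Q: "Q \<in> valid_mech M \<P> D"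
    and D: "0 < D" "D \<le> 1"
  shows "ereal (cval M D) \<le> eps_DP M Q"
  unfolding eps_DP_def
  by (rule Inf_greatest) (use lower_c[OF M cI Q D] in auto)

definition Q0 :: "nat \<Rightarrow> real \<Rightarrow> nat \<Rightarrow> nat \<Rightarrow> real" where
  "Q0 M D i j = (if D < (real M - 1) / real M then (if i = j then 1 - D else D / (real M - 1))
                 else 1 / real M)"

lemma Q0_valid:
  assumes M: "M \<ge> 2" and cI: "class_I M \<P>" and D: "0 < D" "D \<le> 1"
  shows "Q0 M D \<in> valid_mech M \<P> D"
proof -
  have Mpos: "real M > 0" and M1: "real M - 1 > 0" using M by auto
  have mech: "mechanism M (Q0 M D)"
    unfolding mechanism_def
  proof (intro ballI conjI)
    fix i j assume i: "i \<in> {1..M}" and j: "j \<in> {1..M}"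
    show "Q0 M D i j \<ge> 0" using D M1 Mpos by (simp add: Q0_def)
  next
    fix i assume i: "i \<in> {1..M}"
    show "(\<Sum>j\<in>{1..M}. Q0 M D i j) = 1"
    proof (cases "D < (real M - 1) / real M")
      case True
      have "(\<Sum>j\<in>{1..M}. Q0 M D i j) = Q0 M D i i + (\<Sum>j\<in>{1..M}-{i}. Q0 M D i j)"
        using i by (simp add: sum.remove)
      also have "(\<Sum>j\<in>{1..M}-{i}. Q0 M D i j) = (\<Sum>j\<in>{1..M}-{i}. D / (real M - 1))"
        by (rule sum.cong) (use True in \<open>auto simp: Q0_def\<close>)
      also have "\<dots> = (real M - 1) * (D / (real M - 1))"
        using i by (simp add: of_nat_diff)
      also have "\<dots> = D" using M1 by simp
      finally show ?thesis using True by (simp add: Q0_def)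
    next
      case False
      then show ?thesis using Mpos by (simp add: Q0_def)
    qed
  qed
  have dist: "(\<Sum>i\<in>{1..M}. P i * distortion (Q0 M D) i) \<le> D" if P: "P \<in> \<P>" for P
  proof -
    have pd: "(\<Sum>i\<in>{1..M}. P i) = 1" using cI P by (simp add: class_I_def prob_dist_def)
    show ?thesis
    proof (cases "D < (real M - 1) / real M")
      case True
      then have "(\<Sum>i\<in>{1..M}. P i * distortion (Q0 M D) i) = (\<Sum>i\<in>{1..M}. P i) * D"
        by (simp add: distortion_def Q0_def sum_distrib_right)
      then show ?thesis using pd by simp
    next
      case False
      then have "(\<Sum>i\<in>{1..M}. P i * distortion (Q0 M D) i) = (\<Sum>i\<in>{1..M}. P i) * (1 - 1 / real M)"
        by (simp add: distortion_def Q0_def sum_distrib_right)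
      moreover have "1 - 1 / real M = (real M - 1) / real M" using Mpos by (simp add: field_simps)
      ultimately show ?thesis using pd False by simp
    qed
  qed
  show ?thesis using mech dist by (simp add: valid_mech_def)
qed

lemma Q0_eps:
  assumes M: "M \<ge> 2" and D: "0 < D" "D \<le> 1"
  shows "eps_DP M (Q0 M D) \<le> ereal (cval M D)"
proof -
  have Mpos: "real M > 0" and M1: "real M - 1 > 0" using M by auto
  have "cval M D \<ge> 0 \<and> (\<forall>x1\<in>{1..M}. \<forall>x2\<in>{1..M}. \<forall>xh\<in>{1..M}.
          Q0 M D x1 xh \<le> exp (cval M D) * Q0 M D x2 xh)"
  proof (cases "D < (real M - 1) / real M")
    case True
    have "D * real M < real M - 1" using True Mpos by (simp add: less_divide_eq)
    then have lt: "D < (real M - 1) * (1 - D)" by (simp add: algebra_simps)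
    define r where "r = (real M - 1) * (1 - D) / D"
    have r1: "r > 1" using lt D by (simp add: r_def)
    have ec: "exp (cval M D) = r" using True r1 by (simp add: cval_def r_def)
    have b: "D / (real M - 1) > 0" using D M1 by simp
    have a: "r * (D / (real M - 1)) = 1 - D" using D M1 by (simp add: r_def)
    have "1 * (D / (real M - 1)) \<le> r * (D / (real M - 1))"
      by (rule mult_right_mono) (use r1 b in auto)
    then have ab: "D / (real M - 1) \<le> 1 - D" using a by simp
    have "cval M D \<ge> 0" using True r1 by (simp add: cval_def r_def)
    moreover have "Q0 M D x1 xh \<le> r * Q0 M D x2 xh" for x1 x2 xh
    proof -
      have f1: "1 - D \<le> r * (1 - D)" using mult_right_mono[of 1 r "1 - D"] r1 ab b by simp
      have f2: "D / (real M - 1) \<le> r * (D / (real M - 1))"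
        using mult_right_mono[of 1 r "D / (real M - 1)"] r1 b by simp
      show ?thesis using True a ab f1 f2 by (auto simp: Q0_def)
    qed
    ultimately show ?thesis using ec by simp
  next
    case False
    then show ?thesis by (simp add: cval_def Q0_def)
  qed
  then show ?thesis unfolding eps_DP_def by (intro Inf_lower) auto
qed

theorem theorem1:
  fixes M :: nat and \<P> :: "(nat \<Rightarrow> real) set" and D :: real
  assumes "M \<ge> 2" and "class_I M \<P>" and "0 < D" and "D \<le> 1"
  shows "eps_DP_opt M \<P> D =
           (if D < (real M - 1) / real M
            then ereal (ln ((real M - 1) * (1 - D) / D)) else 0)
       \<and> (\<exists>Q\<in>valid_mech M \<P> D. eps_DP M Q = eps_DP_opt M \<P> D)"
proof -
  note A = assms(1) assms(2) assms(3) assms(4)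
  have v: "Q0 M D \<in> valid_mech M \<P> D" by (rule Q0_valid[OF A])
  have e0: "eps_DP M (Q0 M D) = ereal (cval M D)"
    using Q0_eps[OF assms(1) assms(3) assms(4)] eps_ge[OF assms(1) assms(2) v assms(3) assms(4)]
    by (rule antisym)
  have lo: "ereal (cval M D) \<le> eps_DP_opt M \<P> D"
    unfolding eps_DP_opt_def
    by (rule Inf_greatest) (use eps_ge[OF assms(1) assms(2) _ assms(3) assms(4)] in auto)
  have hi: "eps_DP_opt M \<P> D \<le> ereal (cval M D)"
    unfolding eps_DP_opt_def using v e0 by (metis INF_lower)
  have opt: "eps_DP_opt M \<P> D = ereal (cval M D)" by (rule antisym[OF hi lo])
  have "ereal (cval M D) = (if D < (real M - 1) / real M
            then ereal (ln ((real M - 1) * (1 - D) / D)) else 0)"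
    by (simp add: cval_def zero_ereal_def)
  then show ?thesis using opt e0 v by auto
qed

end
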